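(* Let $n\ge 1$, $0\le m\le n$, and fix $\chi\in\mathcal C^\infty_0(\mathbb R)$ with $0\le\chi\le1$, $\chi\equiv1$ on $[-1/2,1/2]$ and $\mathrm{supp}\,\chi\subset(-1,1)$. Let $0<\mu<1$ and $\mu'>0$. Then there exists $0<\delta_0<1$ such that the following holds. Let $0<\epsilon<1$, and let $\rho(z)=\sum_{j=1}^m(x_j^2+\mu_jy_j^2)+\sum_{j=m+1}^n(x_j^2-\mu_jy_j^2)$ on $\mathbb B^n_\epsilon\subset\mathbb C^n$ ($z_j=x_j+iy_j$), with $\mu'\le\mu_j\le1$ for $j=1,\dots,m$ and $0\le\mu_j\le\mu$ for $j=m+1,\dots,n$. Let $\delta_{m+1},\dots,\delta_n$ satisfy $0<\delta_j\le\mu_j$ and $\delta_j<\delta_0$, and set $\psi_{\epsilon,\delta}(z):=\chi(\|z\|^2/\epsilon^2)\sum_{j=m+1}^n\delta_jy_j^2$. Then $\rho_{\epsilon,\delta}:=\rho+\psi_{\epsilon,\delta}$ is strictly plurisubharmonic on $\mathbb B^n_\epsilon$, and all its critical points in $\mathbb B^n_\epsilon$ lie in $\{\rho_{\epsilon,\delta}\le0\}$.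
   Context: $\mathbb B^n_\epsilon$ is the open ball of radius $\epsilon$ about $0$ in $\mathbb C^n$. *)

theory Defs
  imports "HOL-Analysis.Analysis"
begin

definition smooth_real :: "(real \<Rightarrow> real) \<Rightarrow> bool" where
  "smooth_real f \<longleftrightarrow> (\<forall>k x. (deriv ^^ k) f differentiable at x)"

definition fsupp :: "(real \<Rightarrow> real) \<Rightarrow> real set" where
  "fsupp f = closure {x. f x \<noteq> 0}"

definition ddir :: "complex^'n \<Rightarrow> (complex^'n \<Rightarrow> complex) \<Rightarrow> complex^'n \<Rightarrow> complex" where
  "ddir v f p = frechet_derivative f (at p) v"

definition dz :: "'n::finite \<Rightarrow> (complex^'n \<Rightarrow> complex) \<Rightarrow> complex^'n \<Rightarrow> complex" where
  "dz j f p = (ddir (axis j 1) f p - \<i> * ddir (axis j \<i>) f p) / 2"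

definition dzbar :: "'n::finite \<Rightarrow> (complex^'n \<Rightarrow> complex) \<Rightarrow> complex^'n \<Rightarrow> complex" where
  "dzbar j f p = (ddir (axis j 1) f p + \<i> * ddir (axis j \<i>) f p) / 2"

definition levi_form :: "(complex^'n::finite \<Rightarrow> real) \<Rightarrow> complex^'n \<Rightarrow> complex^'n \<Rightarrow> complex" where
  "levi_form f p w =
     (\<Sum>j\<in>UNIV. \<Sum>k\<in>UNIV. dz j (dzbar k (\<lambda>z. complex_of_real (f z))) p * w$j * cnj (w$k))"

definition C2_on :: "(complex^'n::finite \<Rightarrow> real) \<Rightarrow> (complex^'n) set \<Rightarrow> bool" where
  "C2_on f U \<longleftrightarrow>
     (\<forall>x\<in>U. f differentiable at x) \<and>
     (\<forall>v. \<forall>x\<in>U. (\<lambda>y. frechet_derivative f (at y) v) differentiable at x) \<and>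
     (\<forall>u v. continuous_on U (\<lambda>y. frechet_derivative (\<lambda>y'. frechet_derivative f (at y') v) (at y) u))"

definition strictly_psh_on :: "(complex^'n::finite \<Rightarrow> real) \<Rightarrow> (complex^'n) set \<Rightarrow> bool" where
  "strictly_psh_on f U \<longleftrightarrow> open U \<and> C2_on f U \<and>
     (\<forall>p\<in>U. \<forall>w. w \<noteq> 0 \<longrightarrow> Re (levi_form f p w) > 0)"

end

theory Submission
  imports Defs
begin


lemmas hd_of_real = bounded_linear.has_derivative[OF bounded_linear_of_real]

lemma vec_decomp: "(w::complex^'n::finite) = (\<Sum>j\<in>UNIV. Re (w$j) *\<^sub>R axis j 1 + Im (w$j) *\<^sub>R axis j \<i>)"
proof -
  have "\<And>i. (\<Sum>j\<in>UNIV. Re (w$j) *\<^sub>R axis j 1 + Im (w$j) *\<^sub>R axis j \<i>) $ i = (\<Sum>j\<in>UNIV. if i = j then Re (w$j) *\<^sub>R 1 + Im (w$j) *\<^sub>R \<i> else 0)"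
    by (simp add: axis_def vector_scaleR_component sum_component if_distrib cong: if_cong)
  moreover have "\<And>j. Re (w$j) *\<^sub>R (1::complex) + Im (w$j) *\<^sub>R \<i> = w$j"
    by (simp add: complex_eq_iff)
  ultimately show ?thesis by (simp only: vec_eq_iff sum.delta finite UNIV_I if_True) simp
qed

lemma linear_decomp: assumes "linear L"
  shows "L (w::complex^'n::finite) = (\<Sum>j\<in>UNIV. Re (w$j) * L (axis j 1) + Im (w$j) * L (axis j \<i>))"
proof -
  have "L w = L (\<Sum>j\<in>UNIV. Re (w$j) *\<^sub>R axis j 1 + Im (w$j) *\<^sub>R axis j \<i>)"
    by (rule arg_cong[where f=L, OF vec_decomp])
  also have "\<dots> = (\<Sum>j\<in>UNIV. Re (w$j) * L (axis j 1) + Im (w$j) * L (axis j \<i>))"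
    unfolding linear_sum[OF assms] o_def linear_add[OF assms] linear_cmul[OF assms] real_scaleR_def ..
  finally show ?thesis .
qed

lemma levi_re:
  fixes f :: "complex^'n::finite \<Rightarrow> real"
  assumes Df: "\<And>y. (f has_derivative Df y) (at y)"
    and H: "\<And>u. ((\<lambda>y. Df y u) has_derivative H u) (at p)"
    and Hl: "\<And>v. linear (\<lambda>u. H u v)"
  shows "Re (levi_form f p w) = (H w w + H (\<chi> j. \<i> * w$j) (\<chi> j. \<i> * w$j)) / 4"
proof -
  define wi where "wi = (\<chi> j. \<i> * w$j)"
  have F: "\<And>y. ((\<lambda>z. complex_of_real (f z)) has_derivative (\<lambda>u. of_real (Df y u))) (at y)"
    by (rule hd_of_real[OF Df])
  have dd: "\<And>y v. ddir v (\<lambda>z. complex_of_real (f z)) y = of_real (Df y v)"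
    unfolding ddir_def using frechet_derivative_at[OF F] by metis
  have dzb: "\<And>k. dzbar k (\<lambda>z. complex_of_real (f z)) = (\<lambda>y. (of_real (Df y (axis k 1)) + \<i> * of_real (Df y (axis k \<i>)))/2)"
    by (auto simp: dzbar_def dd fun_eq_iff)
  have G: "\<And>k. ((\<lambda>y. (of_real (Df y (axis k 1)) + \<i> * of_real (Df y (axis k \<i>)))/2) has_derivative
     (\<lambda>v. (of_real (H (axis k 1) v) + \<i> * of_real (H (axis k \<i>) v))/2)) (at p)"
    by ((rule derivative_eq_intros hd_of_real H refl)+; simp)
  have dzz: "\<And>j k. dz j (dzbar k (\<lambda>z. complex_of_real (f z))) p =
      ((of_real (H (axis k 1) (axis j 1)) + \<i> * of_real (H (axis k \<i>) (axis j 1)))/2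
       - \<i> * ((of_real (H (axis k 1) (axis j \<i>)) + \<i> * of_real (H (axis k \<i>) (axis j \<i>)))/2)) / 2"
    unfolding dz_def ddir_def dzb frechet_derivative_at[OF G, symmetric] by simp
  have lin2: "\<And>u. linear (H u)" using H has_derivative_linear by blast
  have Rec: "\<And>j k. Re (dz j (dzbar k (\<lambda>z. complex_of_real (f z))) p) = (H (axis k 1) (axis j 1) + H (axis k \<i>) (axis j \<i>)) / 4"
    unfolding dzz by simp
  have Imc: "\<And>j k. Im (dz j (dzbar k (\<lambda>z. complex_of_real (f z))) p) = (H (axis k \<i>) (axis j 1) - H (axis k 1) (axis j \<i>)) / 4"
    unfolding dzz by simp
  have R3: "\<And>c x y::complex. Re (c * x * cnj y) = Re c * (Re x * Re y + Im x * Im y) - Im c * (Im x * Re y - Re x * Im y)"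
    by (simp add: algebra_simps)
  have L: "Re (levi_form f p w) = (\<Sum>j\<in>UNIV. \<Sum>k\<in>UNIV.
     ((H (axis k 1) (axis j 1) + H (axis k \<i>) (axis j \<i>)) * (Re (w$j) * Re (w$k) + Im (w$j) * Im (w$k))
      - (H (axis k \<i>) (axis j 1) - H (axis k 1) (axis j \<i>)) * (Im (w$j) * Re (w$k) - Re (w$j) * Im (w$k))) / 4)"
    unfolding levi_form_def Re_sum R3 Rec Imc by (intro sum.cong refl) (simp add: field_simps)
  have HH: "\<And>x. H x x = (\<Sum>k\<in>UNIV. \<Sum>j\<in>UNIV. Re (x$k) * Re (x$j) * H (axis k 1) (axis j 1)
      + Re (x$k) * Im (x$j) * H (axis k 1) (axis j \<i>) + Im (x$k) * Re (x$j) * H (axis k \<i>) (axis j 1)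
      + Im (x$k) * Im (x$j) * H (axis k \<i>) (axis j \<i>))"
  proof -
    fix x :: "complex^'n"
    have "H x x = (\<Sum>k\<in>UNIV. Re (x$k) * H (axis k 1) x + Im (x$k) * H (axis k \<i>) x)"
      by (rule linear_decomp[OF Hl])
    also have "\<dots> = (\<Sum>k\<in>UNIV. \<Sum>j\<in>UNIV. Re (x$k) * Re (x$j) * H (axis k 1) (axis j 1)
      + Re (x$k) * Im (x$j) * H (axis k 1) (axis j \<i>) + Im (x$k) * Re (x$j) * H (axis k \<i>) (axis j 1)
      + Im (x$k) * Im (x$j) * H (axis k \<i>) (axis j \<i>))"
      by (subst (1 2) linear_decomp[OF lin2]) (simp add: sum_distrib_left sum.distrib[symmetric] algebra_simps)
    finally show "H x x = \<dots>" .
  qed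
  have e: "\<And>j k. ((H (axis k 1) (axis j 1) + H (axis k \<i>) (axis j \<i>)) * (Re (w$j) * Re (w$k) + Im (w$j) * Im (w$k))
      - (H (axis k \<i>) (axis j 1) - H (axis k 1) (axis j \<i>)) * (Im (w$j) * Re (w$k) - Re (w$j) * Im (w$k))) =
      (Re (w$k) * Re (w$j) * H (axis k 1) (axis j 1)
      + Re (w$k) * Im (w$j) * H (axis k 1) (axis j \<i>) + Im (w$k) * Re (w$j) * H (axis k \<i>) (axis j 1)
      + Im (w$k) * Im (w$j) * H (axis k \<i>) (axis j \<i>)) +
      (Re (wi$k) * Re (wi$j) * H (axis k 1) (axis j 1)
      + Re (wi$k) * Im (wi$j) * H (axis k 1) (axis j \<i>) + Im (wi$k) * Re (wi$j) * H (axis k \<i>) (axis j 1)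
      + Im (wi$k) * Im (wi$j) * H (axis k \<i>) (axis j \<i>))"
    unfolding wi_def by (simp add: algebra_simps)
  have "Re (levi_form f p w) = (\<Sum>j\<in>UNIV. \<Sum>k\<in>UNIV. (
      (Re (w$k) * Re (w$j) * H (axis k 1) (axis j 1)
      + Re (w$k) * Im (w$j) * H (axis k 1) (axis j \<i>) + Im (w$k) * Re (w$j) * H (axis k \<i>) (axis j 1)
      + Im (w$k) * Im (w$j) * H (axis k \<i>) (axis j \<i>)) +
      (Re (wi$k) * Re (wi$j) * H (axis k 1) (axis j 1)
      + Re (wi$k) * Im (wi$j) * H (axis k 1) (axis j \<i>) + Im (wi$k) * Re (wi$j) * H (axis k \<i>) (axis j 1)
      + Im (wi$k) * Im (wi$j) * H (axis k \<i>) (axis j \<i>))) / 4)"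
    unfolding L e ..
  also have "\<dots> = (H w w + H wi wi) / 4"
    unfolding HH[of w] HH[of wi]
    by (subst (2 3) sum.swap) (simp only: sum_divide_distrib[symmetric] sum.distrib[symmetric])
  finally show ?thesis unfolding wi_def .
qed

definition bf :: "('n::finite \<Rightarrow> real) \<Rightarrow> ('n \<Rightarrow> real) \<Rightarrow> complex^'n \<Rightarrow> complex^'n \<Rightarrow> real" where
 "bf a b y u = (\<Sum>j\<in>UNIV. a j * Re (y$j) * Re (u$j) + b j * Im (y$j) * Im (u$j))"

lemma bf11_inner: "bf (\<lambda>_. 1) (\<lambda>_. 1) y u = inner y u"
  unfolding bf_def inner_vec_def inner_complex_def by simp

lemma bf11_norm: "bf (\<lambda>_. 1) (\<lambda>_. 1) y y = (norm y)\<^sup>2"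
  by (simp add: bf11_inner power2_norm_eq_inner)

lemma bf11_abs: "\<bar>bf (\<lambda>_. 1) (\<lambda>_. 1) y u\<bar> \<le> norm y * norm u"
  unfolding bf11_inner by (rule Cauchy_Schwarz_ineq2)

lemma bf0_abs: assumes "\<And>j. 0 \<le> d j \<and> d j \<le> D"
  shows "\<bar>bf (\<lambda>_. 0) d y u\<bar> \<le> D * norm y * norm u"
proof -
  have "\<bar>bf (\<lambda>_. 0) d y u\<bar> \<le> (\<Sum>j\<in>UNIV. \<bar>d j * Im (y$j) * Im (u$j)\<bar>)"
    unfolding bf_def by (simp add: sum_abs)
  also have "\<dots> \<le> (\<Sum>j\<in>UNIV. D * (\<bar>norm (y$j)\<bar> * \<bar>norm (u$j)\<bar>))"
  proof (rule sum_mono)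
    fix j
    have "\<bar>Im (y$j)\<bar> \<le> norm (y$j)" "\<bar>Im (u$j)\<bar> \<le> norm (u$j)" by (simp_all add: abs_Im_le_cmod)
    then have "\<bar>Im (y$j)\<bar> * \<bar>Im (u$j)\<bar> \<le> norm (y$j) * norm (u$j)" by (simp add: mult_mono)
    moreover have "\<bar>d j\<bar> \<le> D" using assms[of j] by simp
    ultimately have "\<bar>d j\<bar> * (\<bar>Im (y$j)\<bar> * \<bar>Im (u$j)\<bar>) \<le> D * (norm (y$j) * norm (u$j))"
      by (simp add: mult_mono)
    then show "\<bar>d j * Im (y$j) * Im (u$j)\<bar> \<le> D * (\<bar>norm (y$j)\<bar> * \<bar>norm (u$j)\<bar>)"
      by (simp add: abs_mult mult.assoc)
  qed
  also have "\<dots> = D * (\<Sum>j\<in>UNIV. \<bar>norm (y$j)\<bar> * \<bar>norm (u$j)\<bar>)"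
    by (simp add: sum_distrib_left)
  also have "\<dots> \<le> D * (norm y * norm u)"
    using L2_set_mult_ineq[of "\<lambda>j. norm (y$j)" "\<lambda>j. norm (u$j)" UNIV] assms[of undefined]
    unfolding norm_vec_def by (intro mult_left_mono) auto
  finally show ?thesis by simp
qed

lemma bf0_nonneg: assumes "\<And>j. 0 \<le> d j" shows "0 \<le> bf (\<lambda>_. 0) d y y"
  unfolding bf_def using assms by (intro sum_nonneg) (simp add: mult.assoc mult_nonneg_nonneg)

lemma bf0_ge: assumes "\<And>j. 0 \<le> d j" shows "d j * (Im (y$j))\<^sup>2 \<le> bf (\<lambda>_. 0) d y y"
proof -
  have "d j * (Im (y$j))\<^sup>2 = (\<lambda>j. 0 * Re (y$j) * Re (y$j) + d j * Im (y$j) * Im (y$j)) j"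
    by (simp add: power2_eq_square)
  also have "\<dots> \<le> bf (\<lambda>_. 0) d y y" unfolding bf_def
    by (rule member_le_sum) (use assms in \<open>auto simp: mult.assoc mult_nonneg_nonneg\<close>)
  finally show ?thesis .
qed

lemma bf_axis1: "bf a b y (axis j 1) = a j * Re (y$j)"
proof -
  have e: "(\<lambda>k. a k * Re (y$k) * Re (axis j 1 $ k) + b k * Im (y$k) * Im (axis j 1 $ k)) = (\<lambda>k. if k = j then a j * Re (y$j) else 0)"
    by (auto simp: axis_def fun_eq_iff)
  show ?thesis unfolding bf_def e by simp
qed

lemma bf_axisi: "bf a b y (axis j \<i>) = b j * Im (y$j)"
proof -
  have e: "(\<lambda>k. a k * Re (y$k) * Re (axis j \<i> $ k) + b k * Im (y$k) * Im (axis j \<i> $ k)) = (\<lambda>k. if k = j then b j * Im (y$j) else 0)"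
    by (auto simp: axis_def fun_eq_iff)
  show ?thesis unfolding bf_def e by simp
qed

lemma norm_wi: "norm (\<chi> j. \<i> * (w::complex^'n::finite)$j) = norm w"
  unfolding norm_vec_def by (simp add: norm_mult)

lemma bf_wi: "bf a b w w + bf a b (\<chi> j. \<i> * w$j) (\<chi> j. \<i> * w$j) =
   (\<Sum>j\<in>UNIV. (a j + b j) * ((Re (w$j))\<^sup>2 + (Im (w$j))\<^sup>2))"
  unfolding bf_def by (simp add: sum.distrib[symmetric] algebra_simps power2_eq_square)



lemma absmul_le: fixes c A B K :: real
  assumes "0 \<le> A" "A \<le> B" "\<bar>c\<bar> \<le> K" shows "\<bar>c * A\<bar> \<le> K * B"
proof -
  have "\<bar>c * A\<bar> = \<bar>c\<bar> * A" using assms by (simp add: abs_mult)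
  also have "\<dots> \<le> K * B" using assms by (intro mult_mono) auto
  finally show ?thesis .
qed

lemma R_bound:
  fixes K1 K2 D e2 r t X Y P Z cc cc1 cc2 :: real
  assumes K2: "\<bar>cc2\<bar> \<le> K2" and K1: "\<bar>cc1\<bar> \<le> K1" and c: "0 \<le> cc" "cc \<le> 1"
    and r: "0 \<le> r" "r\<^sup>2 \<le> e2" and e2: "0 < e2" and t: "0 \<le> t" and D: "0 \<le> D"
    and X: "\<bar>X\<bar> \<le> r * t" and Y: "\<bar>Y\<bar> \<le> D * r * t" and Z: "\<bar>Z\<bar> \<le> D * t * t"
    and P: "0 \<le> P" "P \<le> D * r\<^sup>2"
  shows "\<bar>cc2 * (2 * X / e2) * (2 * X / e2) * P + cc1 * (2 * t\<^sup>2 / e2) * P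
          + cc1 * (2 * X / e2) * (2 * Y) + cc1 * (2 * X / e2) * (2 * Y) + cc * (2 * Z)\<bar>
         \<le> D * t\<^sup>2 * (4 * K2 + 10 * K1 + 2)"
proof -
  have r4: "r\<^sup>2 * r\<^sup>2 \<le> e2 * e2" using r e2 by (intro mult_mono) auto
  have XX: "X\<^sup>2 \<le> (r * t)\<^sup>2" using X by (metis abs_ge_zero abs_le_square_iff abs_of_nonneg order_trans)
  have A0: "0 \<le> 4 * X\<^sup>2 * P / (e2 * e2)" using P e2 by simp
  have "X\<^sup>2 * P \<le> (r * t)\<^sup>2 * (D * r\<^sup>2)" using XX P by (intro mult_mono) auto
  also have "\<dots> = (r\<^sup>2 * r\<^sup>2) * (D * t\<^sup>2)" by (simp add: power_mult_distrib)
  also have "\<dots> \<le> (e2 * e2) * (D * t\<^sup>2)" using r4 D by (intro mult_right_mono) auto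
  finally have "X\<^sup>2 * P \<le> (e2 * e2) * (D * t\<^sup>2)" .
  then have A1: "4 * X\<^sup>2 * P / (e2 * e2) \<le> 4 * (D * t\<^sup>2)" using e2 by (simp add: divide_le_eq mult.assoc mult.commute)
  have TA: "\<bar>cc2 * (2 * X / e2) * (2 * X / e2) * P\<bar> \<le> K2 * (4 * (D * t\<^sup>2))"
  proof -
    have "cc2 * (2 * X / e2) * (2 * X / e2) * P = cc2 * (4 * X\<^sup>2 * P / (e2 * e2))"
      by (simp add: power2_eq_square)
    then show ?thesis using absmul_le[OF A0 A1 K2] by (simp only:)
  qed
  have B0: "0 \<le> 2 * t\<^sup>2 * P / e2" using P e2 by simp
  have "t\<^sup>2 * P \<le> t\<^sup>2 * (D * r\<^sup>2)" using P by (intro mult_left_mono) auto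
  also have "\<dots> \<le> t\<^sup>2 * (D * e2)" using r D by (intro mult_left_mono) auto
  finally have B1: "2 * t\<^sup>2 * P / e2 \<le> 2 * (D * t\<^sup>2)" using e2 by (simp add: divide_le_eq algebra_simps)
  have TB: "\<bar>cc1 * (2 * t\<^sup>2 / e2) * P\<bar> \<le> K1 * (2 * (D * t\<^sup>2))"
    using absmul_le[OF B0 B1 K1] by simp
  have C0: "0 \<le> 4 * \<bar>X\<bar> * \<bar>Y\<bar> / e2" using e2 by simp
  have "\<bar>X\<bar> * \<bar>Y\<bar> \<le> (r * t) * (D * r * t)" using X Y r t by (intro mult_mono) auto
  also have "\<dots> = r\<^sup>2 * (D * t\<^sup>2)" by (simp add: power2_eq_square)
  also have "\<dots> \<le> e2 * (D * t\<^sup>2)" using r D by (intro mult_right_mono) auto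
  finally have C1: "4 * \<bar>X\<bar> * \<bar>Y\<bar> / e2 \<le> 4 * (D * t\<^sup>2)" using e2 by (simp add: divide_le_eq algebra_simps)
  have TC: "\<bar>cc1 * (2 * X / e2) * (2 * Y)\<bar> \<le> K1 * (4 * (D * t\<^sup>2))"
  proof -
    have "\<bar>cc1 * (2 * X / e2) * (2 * Y)\<bar> = \<bar>cc1 * (4 * \<bar>X\<bar> * \<bar>Y\<bar> / e2)\<bar>"
      using e2 by (simp add: abs_mult)
    then show ?thesis using absmul_le[OF C0 C1 K1] by (simp only:)
  qed
  have TE: "\<bar>cc * (2 * Z)\<bar> \<le> 1 * (2 * (D * t\<^sup>2))"
    using absmul_le[of "\<bar>2 * Z\<bar>" "2 * (D * t\<^sup>2)" cc 1] Z c by (simp add: abs_mult power2_eq_square)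
  have tri: "\<And>a b c d e::real. \<bar>a+b+c+d+e\<bar> \<le> \<bar>a\<bar>+\<bar>b\<bar>+\<bar>c\<bar>+\<bar>d\<bar>+\<bar>e\<bar>" by arith
  have "\<bar>cc2 * (2 * X / e2) * (2 * X / e2) * P + cc1 * (2 * t\<^sup>2 / e2) * P
          + cc1 * (2 * X / e2) * (2 * Y) + cc1 * (2 * X / e2) * (2 * Y) + cc * (2 * Z)\<bar>
        \<le> K2 * (4 * (D * t\<^sup>2)) + K1 * (2 * (D * t\<^sup>2)) + K1 * (4 * (D * t\<^sup>2)) + K1 * (4 * (D * t\<^sup>2)) + 1 * (2 * (D * t\<^sup>2))"
    using TA TB TC TE tri[of "cc2 * (2 * X / e2) * (2 * X / e2) * P" "cc1 * (2 * t\<^sup>2 / e2) * P"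
        "cc1 * (2 * X / e2) * (2 * Y)" "cc1 * (2 * X / e2) * (2 * Y)" "cc * (2 * Z)"] by linarith
  also have "\<dots> = D * t\<^sup>2 * (4 * K2 + 10 * K1 + 2)" by (simp add: algebra_simps)
  finally show ?thesis .
qed
lemmas hd_vec_nth = bounded_linear.has_derivative[OF bounded_linear_vec_nth]

lemma bf_sym: "bf a b y u = bf a b u y"
  unfolding bf_def by (simp add: algebra_simps)

lemma bf_add1: "bf a b (x + y) u = bf a b x u + bf a b y u"
  unfolding bf_def by (simp add: algebra_simps sum.distrib)
lemma bf_scale1: "bf a b (c *\<^sub>R x) u = c * bf a b x u"
  unfolding bf_def by (simp add: algebra_simps sum_distrib_left)
lemma bf_add2: "bf a b u (x + y) = bf a b u x + bf a b u y"
  using bf_add1 bf_sym by metis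
lemma bf_scale2: "bf a b u (c *\<^sub>R x) = c * bf a b u x"
  using bf_scale1 bf_sym by metis

lemma bf_lin1: "linear (\<lambda>y. bf a b y u)"
  by (rule linearI) (simp_all add: bf_add1 bf_scale1)

lemma bf_deriv1: "((\<lambda>y. bf a b y u) has_derivative (\<lambda>v. bf a b v u)) F"
  by (rule bounded_linear_imp_has_derivative, rule linear_conv_bounded_linear[THEN iffD1], rule bf_lin1)

lemma bf_quad: "((\<lambda>y. bf a b y y) has_derivative (\<lambda>v. 2 * bf a b x v)) (at x within s)"
proof -
  have "((\<lambda>y. bf a b y y) has_derivative (\<lambda>v. bf a b v x + bf a b x v)) (at x within s)"
    unfolding bf_def
    by ((rule derivative_eq_intros hd_vec_nth refl)+; simp add: fun_eq_iff sum.distrib[symmetric] algebra_simps)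
  moreover have "(\<lambda>v. bf a b v x + bf a b x v) = (\<lambda>v. 2 * bf a b x v)"
    using bf_sym[of a b _ x] by (simp add: fun_eq_iff)
  ultimately show ?thesis by simp
qed

lemma bf_deriv2: "((\<lambda>y. bf a b u y) has_derivative (\<lambda>v. bf a b u v)) F"
  using bf_deriv1[of a b u F] bf_sym[of a b u] by simp

definition ff :: "(real \<Rightarrow> real) \<Rightarrow> ('n::finite \<Rightarrow> real) \<Rightarrow> ('n \<Rightarrow> real) \<Rightarrow> ('n \<Rightarrow> real) \<Rightarrow> real \<Rightarrow> complex^'n \<Rightarrow> real" where
  "ff c a b d e2 z = bf a b z z + c (bf (\<lambda>_. 1) (\<lambda>_. 1) z z / e2) * bf (\<lambda>_. 0) d z z"

definition Dff :: "(real \<Rightarrow> real) \<Rightarrow> (real \<Rightarrow> real) \<Rightarrow> ('n::finite \<Rightarrow> real) \<Rightarrow> ('n \<Rightarrow> real) \<Rightarrow> ('n \<Rightarrow> real) \<Rightarrow> real \<Rightarrow> complex^'n \<Rightarrow> complex^'n \<Rightarrow> real" where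
  "Dff c c1 a b d e2 y u = 2 * bf a b y u
     + c1 (bf (\<lambda>_. 1) (\<lambda>_. 1) y y / e2) * (2 * bf (\<lambda>_. 1) (\<lambda>_. 1) y u / e2) * bf (\<lambda>_. 0) d y y
     + c (bf (\<lambda>_. 1) (\<lambda>_. 1) y y / e2) * (2 * bf (\<lambda>_. 0) d y u)"

definition Hff :: "(real \<Rightarrow> real) \<Rightarrow> (real \<Rightarrow> real) \<Rightarrow> (real \<Rightarrow> real) \<Rightarrow> ('n::finite \<Rightarrow> real) \<Rightarrow> ('n \<Rightarrow> real) \<Rightarrow> ('n \<Rightarrow> real) \<Rightarrow> real \<Rightarrow> complex^'n \<Rightarrow> complex^'n \<Rightarrow> complex^'n \<Rightarrow> real" where
  "Hff c c1 c2 a b d e2 y u v = 2 * bf a b v u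
     + c2 (bf (\<lambda>_. 1) (\<lambda>_. 1) y y / e2) * (2 * bf (\<lambda>_. 1) (\<lambda>_. 1) y v / e2) * (2 * bf (\<lambda>_. 1) (\<lambda>_. 1) y u / e2) * bf (\<lambda>_. 0) d y y
     + c1 (bf (\<lambda>_. 1) (\<lambda>_. 1) y y / e2) * (2 * bf (\<lambda>_. 1) (\<lambda>_. 1) v u / e2) * bf (\<lambda>_. 0) d y y
     + c1 (bf (\<lambda>_. 1) (\<lambda>_. 1) y y / e2) * (2 * bf (\<lambda>_. 1) (\<lambda>_. 1) y u / e2) * (2 * bf (\<lambda>_. 0) d y v)
     + c1 (bf (\<lambda>_. 1) (\<lambda>_. 1) y y / e2) * (2 * bf (\<lambda>_. 1) (\<lambda>_. 1) y v / e2) * (2 * bf (\<lambda>_. 0) d y u)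
     + c (bf (\<lambda>_. 1) (\<lambda>_. 1) y y / e2) * (2 * bf (\<lambda>_. 0) d v u)"

context
  fixes c c1 c2 :: "real \<Rightarrow> real"
  assumes d1: "\<And>x. (c has_real_derivative c1 x) (at x)"
    and d2: "\<And>x. (c1 has_real_derivative c2 x) (at x)"
begin

lemma comp_d1: assumes "e2 \<noteq> 0" shows "((\<lambda>y. c (bf (\<lambda>_. 1) (\<lambda>_. 1) y y / e2)) has_derivative
   (\<lambda>v. (2 * bf (\<lambda>_. 1) (\<lambda>_. 1) y v / e2) * c1 (bf (\<lambda>_. 1) (\<lambda>_. 1) y y / e2))) (at y)"
  by (rule DERIV_compose_FDERIV[OF d1]) (rule derivative_eq_intros bf_quad refl | simp add: assms)+

lemma comp_d2: assumes "e2 \<noteq> 0" shows "((\<lambda>y. c1 (bf (\<lambda>_. 1) (\<lambda>_. 1) y y / e2)) has_derivative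
   (\<lambda>v. (2 * bf (\<lambda>_. 1) (\<lambda>_. 1) y v / e2) * c2 (bf (\<lambda>_. 1) (\<lambda>_. 1) y y / e2))) (at y)"
  by (rule DERIV_compose_FDERIV[OF d2]) (rule derivative_eq_intros bf_quad refl | simp add: assms)+

lemma ff_deriv: assumes "e2 \<noteq> 0" shows "(ff c a b d e2 has_derivative Dff c c1 a b d e2 y) (at y)"
proof -
  have "((\<lambda>z. bf a b z z + c (bf (\<lambda>_. 1) (\<lambda>_. 1) z z / e2) * bf (\<lambda>_. 0) d z z) has_derivative
     (\<lambda>v. 2 * bf a b y v + (c (bf (\<lambda>_. 1) (\<lambda>_. 1) y y / e2) * (2 * bf (\<lambda>_. 0) d y v) +
        ((2 * bf (\<lambda>_. 1) (\<lambda>_. 1) y v / e2) * c1 (bf (\<lambda>_. 1) (\<lambda>_. 1) y y / e2)) * bf (\<lambda>_. 0) d y y))) (at y)"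
    by (rule has_derivative_add[OF bf_quad has_derivative_mult[OF comp_d1[OF assms] bf_quad]])
  then show ?thesis unfolding ff_def[abs_def] Dff_def[abs_def]
    by (simp add: algebra_simps)
qed


lemma Dff_deriv: assumes "e2 \<noteq> 0"
  shows "((\<lambda>y. Dff c c1 a b d e2 y u) has_derivative Hff c c1 c2 a b d e2 y u) (at y)"
  unfolding Dff_def
  apply (rule derivative_eq_intros bf_deriv1 bf_quad comp_d1[OF assms] comp_d2[OF assms] refl | simp add: assms)+
  apply (simp add: fun_eq_iff Hff_def)
  apply (simp add: algebra_simps)
  done


end


context
  fixes c c1 c2 :: "real \<Rightarrow> real"
  assumes d1: "\<And>x. (c has_real_derivative c1 x) (at x)"
    and d2: "\<And>x. (c1 has_real_derivative c2 x) (at x)"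
begin
lemma Dff_lin: "linear (\<lambda>u. Hff c c1 c2 a b d e2 y u v)"
  by (rule linearI) (simp_all add: Hff_def bf_add2 bf_scale2 algebra_simps add_divide_distrib)

lemma cont_bf1: "continuous_on S (\<lambda>y. bf a b y u)"
  by (rule linear_continuous_on, rule linear_conv_bounded_linear[THEN iffD1], rule bf_lin1)

lemma cont_bfq: "continuous_on S (\<lambda>y. bf a b y y)"
  by (rule has_derivative_continuous_on, rule bf_quad)

lemma cont_comp: assumes "continuous_on UNIV g" "e2 \<noteq> 0"
  shows "continuous_on S (\<lambda>y. g (bf (\<lambda>_. 1) (\<lambda>_. 1) y y / e2))"
  by (rule continuous_on_compose2[OF assms(1)]) (intro continuous_intros cont_bfq, auto simp: assms)

lemma Hff_cont: assumes "continuous_on UNIV c2" "e2 \<noteq> 0"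
  shows "continuous_on S (\<lambda>y. Hff c c1 c2 a b d e2 y u v)"
proof -
  have cc: "continuous_on UNIV c" using d1
    by (intro continuous_at_imp_continuous_on ballI DERIV_isCont) blast
  have cc1: "continuous_on UNIV c1" using d2
    by (intro continuous_at_imp_continuous_on ballI DERIV_isCont) blast
  show ?thesis unfolding Hff_def
    apply (intro continuous_intros cont_bf1 cont_bfq cont_comp[OF _ assms(2)] cc cc1 assms(1))
    apply (auto simp: assms)
    done
qed

end



lemma fin_ineq: fixes Q E h1 h2 q1 q2 :: real
  shows "0 < 2*Q - 2*E \<Longrightarrow> \<bar>h1 - 2*q1\<bar> \<le> E \<Longrightarrow> \<bar>h2 - 2*q2\<bar> \<le> E \<Longrightarrow> Q \<le> q1 + q2 \<Longrightarrow> 0 < (h1+h2)/4"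
  by (simp add: abs_le_iff)

lemma psh_part:
  fixes c c1 c2 :: "real \<Rightarrow> real" and b d :: "'n::finite \<Rightarrow> real"
  assumes d1: "\<And>x. (c has_real_derivative c1 x) (at x)"
    and d2: "\<And>x. (c1 has_real_derivative c2 x) (at x)"
    and c2c: "continuous_on UNIV c2"
    and c01: "\<forall>t. 0 \<le> c t \<and> c t \<le> 1"
    and K1: "\<And>s. s \<in> {0..1} \<Longrightarrow> \<bar>c1 s\<bar> \<le> K1"
    and K2: "\<And>s. s \<in> {0..1} \<Longrightarrow> \<bar>c2 s\<bar> \<le> K2"
    and eps: "0 < \<epsilon>" and dd: "\<And>j. 0 \<le> d j \<and> d j \<le> D"
    and bb: "\<And>j. - \<mu> \<le> b j" and DC: "D * (4 * K2 + 10 * K1 + 2) < 1 - \<mu>"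
  shows "strictly_psh_on (ff c (\<lambda>_. 1) b d (\<epsilon>\<^sup>2)) (ball 0 \<epsilon>)"
proof -
  define e2 where "e2 = \<epsilon>\<^sup>2"
  have e2p: "0 < e2" and e2ne: "e2 \<noteq> 0" using eps by (simp_all add: e2_def)
  define f where "f = ff c (\<lambda>_. 1) b d e2"
  define Df where "Df = Dff c c1 (\<lambda>_. 1) b d e2"
  define Hf where "Hf = Hff c c1 c2 (\<lambda>_. 1) b d e2"
  have fD: "\<And>y. (f has_derivative Df y) (at y)"
    unfolding f_def Df_def by (rule ff_deriv[OF d1 d2 e2ne])
  have HD: "\<And>y u. ((\<lambda>y. Df y u) has_derivative Hf y u) (at y)"
    unfolding Hf_def Df_def by (rule Dff_deriv[OF d1 d2 e2ne])
  have fr1: "\<And>y. frechet_derivative f (at y) = Df y"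
    using frechet_derivative_at[OF fD] by metis
  have fr2: "\<And>y v. frechet_derivative (\<lambda>y. Df y v) (at y) = Hf y v"
    using frechet_derivative_at[OF HD] by metis
  have D0: "0 \<le> D" using dd[of undefined] by linarith
  have C2: "C2_on f (ball 0 \<epsilon>)"
    unfolding C2_on_def fr1 fr2
  proof (intro conjI allI ballI)
    fix x show "f differentiable at x" using fD by (rule differentiableI)
  next
    fix v x show "(\<lambda>y. Df y v) differentiable at x" using HD by (rule differentiableI)
  next
    fix u v show "continuous_on (ball 0 \<epsilon>) (\<lambda>y. Hf y v u)"
      unfolding Hf_def by (rule Hff_cont[OF d1 d2 c2c e2ne])
  qed
  have pos: "Re (levi_form f p w) > 0" if p: "p \<in> ball 0 \<epsilon>" and w: "w \<noteq> 0" for p w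
  proof -
    define s where "s = bf (\<lambda>_. 1) (\<lambda>_. 1) p p / e2"
    have np: "(norm p)\<^sup>2 \<le> e2" using p eps unfolding e2_def
      by (simp add: power_mono less_imp_le)
    have s01: "s \<in> {0..1}" unfolding s_def bf11_norm using np e2p by simp
    define C where "C = 4 * K2 + 10 * K1 + 2"
    have Rb: "\<bar>Hf p v v - 2 * bf (\<lambda>_. 1) b v v\<bar> \<le> D * (norm v)\<^sup>2 * C" for v
    proof -
      have "Hf p v v - 2 * bf (\<lambda>_. 1) b v v =
          c2 s * (2 * bf (\<lambda>_. 1) (\<lambda>_. 1) p v / e2) * (2 * bf (\<lambda>_. 1) (\<lambda>_. 1) p v / e2) * bf (\<lambda>_. 0) d p p
          + c1 s * (2 * (norm v)\<^sup>2 / e2) * bf (\<lambda>_. 0) d p p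
          + c1 s * (2 * bf (\<lambda>_. 1) (\<lambda>_. 1) p v / e2) * (2 * bf (\<lambda>_. 0) d p v)
          + c1 s * (2 * bf (\<lambda>_. 1) (\<lambda>_. 1) p v / e2) * (2 * bf (\<lambda>_. 0) d p v)
          + c s * (2 * bf (\<lambda>_. 0) d v v)"
        unfolding Hf_def Hff_def s_def bf11_norm[of v] by simp
      also have "\<bar>\<dots>\<bar> \<le> D * (norm v)\<^sup>2 * C" unfolding C_def
      proof (rule R_bound)
        show "\<bar>c2 s\<bar> \<le> K2" using K2 s01 by blast
        show "\<bar>c1 s\<bar> \<le> K1" using K1 s01 by blast
        show "0 \<le> c s" "c s \<le> 1" using c01 by auto
        show "0 \<le> norm p" "(norm p)\<^sup>2 \<le> e2" "0 < e2" "0 \<le> norm v" "0 \<le> D"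
          using np e2p D0 by auto
        show "\<bar>bf (\<lambda>_. 1) (\<lambda>_. 1) p v\<bar> \<le> norm p * norm v" by (rule bf11_abs)
        show "\<bar>bf (\<lambda>_. 0) d p v\<bar> \<le> D * norm p * norm v" by (rule bf0_abs[OF dd])
        show "\<bar>bf (\<lambda>_. 0) d v v\<bar> \<le> D * norm v * norm v" by (rule bf0_abs[OF dd])
        show "0 \<le> bf (\<lambda>_. 0) d p p" using dd by (intro bf0_nonneg) auto
        show "bf (\<lambda>_. 0) d p p \<le> D * (norm p)\<^sup>2"
          using bf0_abs[where d=d and D=D and y=p and u=p, OF dd] by (simp add: power2_eq_square mult.assoc)
      qed
      finally show ?thesis .
    qed
    define wi where "wi = (\<chi> j. \<i> * w$j)"
    have nwi: "norm wi = norm w" unfolding wi_def by (rule norm_wi)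
    have nw2: "(norm w)\<^sup>2 = (\<Sum>j\<in>UNIV. (Re (w$j))\<^sup>2 + (Im (w$j))\<^sup>2)"
      using bf11_norm[of w] by (simp add: bf_def power2_eq_square)
    have Q: "(1 - \<mu>) * (norm w)\<^sup>2 \<le> bf (\<lambda>_. 1) b w w + bf (\<lambda>_. 1) b wi wi"
      unfolding wi_def bf_wi nw2 sum_distrib_left
      by (rule sum_mono, rule mult_right_mono) (use bb in auto)
    have L: "Re (levi_form f p w) = (Hf p w w + Hf p wi wi) / 4"
      unfolding wi_def Hf_def by (rule levi_re[OF fD HD[unfolded Hf_def] Dff_lin[OF d1 d2]])
    have t2: "0 < (norm w)\<^sup>2" using w by simp
    have "2 * ((1 - \<mu>) * (norm w)\<^sup>2) - 2 * (D * (norm w)\<^sup>2 * C) > 0"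
    proof -
      have "D * (norm w)\<^sup>2 * C = (D * C) * (norm w)\<^sup>2" by simp
      also have "\<dots> < (1 - \<mu>) * (norm w)\<^sup>2" using DC t2 unfolding C_def by (intro mult_strict_right_mono) auto
      finally show ?thesis by linarith
    qed
    then show ?thesis unfolding L using fin_ineq Rb[of w] Rb[of wi, unfolded nwi] Q by blast
  qed
  show ?thesis unfolding strictly_psh_on_def e2_def[symmetric] f_def[symmetric]
    using C2 pos by auto
qed

lemma crit_part:
  fixes c c1 c2 :: "real \<Rightarrow> real" and b d :: "'n::finite \<Rightarrow> real"
  assumes d1: "\<And>x. (c has_real_derivative c1 x) (at x)"
    and d2: "\<And>x. (c1 has_real_derivative c2 x) (at x)"
    and c01: "\<forall>t. 0 \<le> c t \<and> c t \<le> 1"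
    and K1: "\<And>s. s \<in> {0..1} \<Longrightarrow> \<bar>c1 s\<bar> \<le> K1"
    and eps: "0 < \<epsilon>" and dd: "\<And>j. 0 \<le> d j \<and> d j \<le> D"
    and DK1: "D * K1 < 1" and DK1': "D * K1 < \<mu>'"
    and bS: "\<And>j. j \<in> S \<Longrightarrow> \<mu>' \<le> b j \<and> d j = 0"
    and bN: "\<And>j. j \<notin> S \<Longrightarrow> 0 < d j \<and> d j \<le> - b j"
    and p: "p \<in> ball 0 \<epsilon>"
    and crit: "(ff c (\<lambda>_. 1) b d (\<epsilon>\<^sup>2) has_derivative (\<lambda>_. 0)) (at p)"
  shows "ff c (\<lambda>_. 1) b d (\<epsilon>\<^sup>2) p \<le> 0"
proof -
  define e2 where "e2 = \<epsilon>\<^sup>2"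
  have e2p: "0 < e2" and e2ne: "e2 \<noteq> 0" using eps by (simp_all add: e2_def)
  have D0: "0 \<le> D" using dd[of undefined] by linarith
  have np: "(norm p)\<^sup>2 \<le> e2" using p eps unfolding e2_def
    by (simp add: power_mono less_imp_le)
  define s where "s = bf (\<lambda>_. 1) (\<lambda>_. 1) p p / e2"
  have s01: "s \<in> {0..1}" unfolding s_def bf11_norm using np e2p by simp
  define P where "P = bf (\<lambda>_. 0) d p p"
  define T where "T = P / e2"
  have P0: "0 \<le> P" unfolding P_def using dd by (intro bf0_nonneg) auto
  have PD: "P \<le> D * e2"
  proof -
    have "P \<le> D * (norm p * norm p)"
      using bf0_abs[where d=d and D=D and y=p and u=p, OF dd] unfolding P_def by (simp add: mult.assoc)
    also have "\<dots> \<le> D * e2" using np D0 by (intro mult_left_mono) (auto simp: power2_eq_square)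
    finally show ?thesis .
  qed
  have T0: "0 \<le> T" and TD: "T \<le> D" using P0 PD e2p by (auto simp: T_def divide_le_eq mult.commute)
  have cT: "\<bar>c1 s * T\<bar> \<le> D * K1"
  proof -
    have "\<bar>c1 s * T\<bar> = \<bar>c1 s\<bar> * T" using T0 by (simp add: abs_mult)
    also have "\<dots> \<le> K1 * D" using K1[OF s01] T0 TD by (intro mult_mono) auto
    finally show ?thesis by (simp add: mult.commute)
  qed
  have Dz: "Dff c c1 (\<lambda>_. 1) b d e2 p = (\<lambda>_. 0)"
    using has_derivative_unique[OF ff_deriv[OF d1 d2 e2ne] crit[folded e2_def]] .
  have Re0: "Re (p$j) = 0" for j
  proof -
    have "Dff c c1 (\<lambda>_. 1) b d e2 p (axis j 1) = 0" using Dz by simp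
    then have "2 * Re (p$j) * (1 + c1 s * T) = 0"
      unfolding Dff_def bf_axis1 s_def[symmetric] P_def[symmetric] T_def by (simp add: algebra_simps)
    moreover have "1 + c1 s * T \<noteq> 0" using cT DK1 by (auto simp: abs_le_iff)
    ultimately show ?thesis by simp
  qed
  have Imeq: "Im (p$j) * (b j + c1 s * T + c s * d j) = 0" for j
  proof -
    have "Dff c c1 (\<lambda>_. 1) b d e2 p (axis j \<i>) = 0" using Dz by simp
    then have "2 * (Im (p$j) * (b j + c1 s * T + c s * d j)) = 0"
      unfolding Dff_def bf_axisi s_def[symmetric] P_def[symmetric] T_def by (simp add: algebra_simps)
    then show ?thesis by simp
  qed
  have fp: "ff c (\<lambda>_. 1) b d e2 p = (\<Sum>j\<in>UNIV. (b j + c s * d j) * (Im (p$j))\<^sup>2)"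
    unfolding ff_def s_def[symmetric] unfolding bf_def
    by (simp add: Re0 sum_distrib_left sum.distrib[symmetric] algebra_simps power2_eq_square)
  have trm: "(b j + c s * d j) * (Im (p$j))\<^sup>2 \<le> 0" for j
  proof (cases "Im (p$j) = 0")
    case True then show ?thesis by simp
  next
    case False
    then have eq: "b j + c s * d j = - (c1 s * T)" using Imeq[of j] by simp
    show ?thesis
    proof (cases "j \<in> S")
      case True
      then have "\<mu>' \<le> b j" "d j = 0" using bS by auto
      then show ?thesis using eq cT DK1' by (auto simp: abs_le_iff)
    next
      case jN: False
      show ?thesis
      proof (cases "0 \<le> c1 s")
        case True
        then have "0 \<le> c1 s * T" using T0 by simp
        then show ?thesis using eq by (simp add: mult_nonpos_nonneg)
      next
        case False
        have "0 < d j * (Im (p$j))\<^sup>2" using bN[OF jN] \<open>Im (p$j) \<noteq> 0\<close> by simp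
        also have "\<dots> \<le> P" unfolding P_def using dd by (intro bf0_ge) auto
        finally have "0 < T" using e2p by (simp add: T_def)
        then have "c1 s * T < 0" using False by (simp add: mult_neg_pos)
        moreover have "c s * d j \<le> d j" using c01 bN[OF jN] by (simp add: mult_left_le_one_le)
        ultimately show ?thesis using eq bN[OF jN] by linarith
      qed
    qed
  qed
  show ?thesis unfolding e2_def[symmetric] fp using trm by (simp add: sum_nonpos)
qed
theorem lemma6p2:
  fixes m :: nat and cutoff :: "real \<Rightarrow> real" and \<mu> \<mu>' :: real
  assumes "m \<le> CARD('n::finite)"
    and "smooth_real cutoff"
    and "\<forall>t. 0 \<le> cutoff t \<and> cutoff t \<le> 1"
    and "\<forall>t\<in>{-1/2..1/2}. cutoff t = 1"
    and "fsupp cutoff \<subseteq> {-1<..<1}"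
    and "0 < \<mu>" and "\<mu> < 1" and "0 < \<mu>'"
  shows "\<exists>\<delta>0. 0 < \<delta>0 \<and> \<delta>0 < 1 \<and>
    (\<forall>(S::'n set) (\<epsilon>::real) (\<mu>s::'n \<Rightarrow> real) (\<delta>::'n \<Rightarrow> real).
       card S = m \<and> 0 < \<epsilon> \<and> \<epsilon> < 1 \<and>
       (\<forall>j\<in>S. \<mu>' \<le> \<mu>s j \<and> \<mu>s j \<le> 1) \<and>
       (\<forall>j. j \<notin> S \<longrightarrow> 0 \<le> \<mu>s j \<and> \<mu>s j \<le> \<mu>) \<and>
       (\<forall>j. j \<notin> S \<longrightarrow> 0 < \<delta> j \<and> \<delta> j \<le> \<mu>s j \<and> \<delta> j < \<delta>0)
       \<longrightarrow>
       (let \<rho>\<epsilon>\<delta> = (\<lambda>z::complex^'n.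
               (\<Sum>j\<in>S. (Re (z$j))\<^sup>2 + \<mu>s j * (Im (z$j))\<^sup>2)
             + (\<Sum>j\<in>UNIV - S. (Re (z$j))\<^sup>2 - \<mu>s j * (Im (z$j))\<^sup>2)
             + cutoff ((norm z)\<^sup>2 / \<epsilon>\<^sup>2) * (\<Sum>j\<in>UNIV - S. \<delta> j * (Im (z$j))\<^sup>2))
        in strictly_psh_on \<rho>\<epsilon>\<delta> (ball 0 \<epsilon>) \<and>
           (\<forall>p\<in>ball 0 \<epsilon>. (\<rho>\<epsilon>\<delta> has_derivative (\<lambda>_. 0)) (at p) \<longrightarrow> \<rho>\<epsilon>\<delta> p \<le> 0)))"
proof -
  define c1 where "c1 = deriv cutoff"
  define c2 where "c2 = deriv c1"
  have sm: "\<And>k x. (deriv ^^ k) cutoff differentiable at x"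
    using assms(2) unfolding smooth_real_def by blast
  have d1: "\<And>x. (cutoff has_real_derivative c1 x) (at x)"
    unfolding c1_def using sm[of 0] by (simp add: DERIV_deriv_iff_real_differentiable)
  have d2: "\<And>x. (c1 has_real_derivative c2 x) (at x)"
    unfolding c2_def c1_def using sm[of 1] by (simp add: DERIV_deriv_iff_real_differentiable)
  have c2c: "continuous_on UNIV c2"
  proof (intro continuous_at_imp_continuous_on ballI)
    fix x :: real
    have "(deriv ^^ 2) cutoff differentiable at x" by (rule sm)
    then have "c2 differentiable at x" by (simp add: c2_def c1_def numeral_2_eq_2)
    then show "isCont c2 x" by (rule differentiable_imp_continuous_within)
  qed
  have c1c: "continuous_on {0..1} c1" using d2
    by (intro continuous_at_imp_continuous_on ballI DERIV_isCont) blast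
  have c2c': "continuous_on {0..1} c2" using c2c by (rule continuous_on_subset) auto
  obtain K1 where K1: "K1 \<ge> 0" "\<And>s. s \<in> {0..1} \<Longrightarrow> \<bar>c1 s\<bar> \<le> K1"
    using continuous_on_compact_bound[OF compact_Icc c1c] by (metis real_norm_def)
  obtain K2 where K2: "K2 \<ge> 0" "\<And>s. s \<in> {0..1} \<Longrightarrow> \<bar>c2 s\<bar> \<le> K2"
    using continuous_on_compact_bound[OF compact_Icc c2c'] by (metis real_norm_def)
  define C where "C = 4 * K2 + 10 * K1 + 2"
  have C2: "2 \<le> C" "K1 \<le> C" using K1 K2 by (auto simp: C_def)
  define mm where "mm = min (1 - \<mu>) \<mu>'"
  have m: "0 < mm" "mm \<le> 1 - \<mu>" "mm \<le> \<mu>'" using assms(7,8) by (auto simp: mm_def)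
  define \<delta>0 where "\<delta>0 = mm / (2 * (C + 1))"
  have d0p: "0 < \<delta>0" using m C2 by (simp add: \<delta>0_def)
  have d0C: "\<delta>0 * C < mm"
  proof -
    have "\<delta>0 * C = mm * (C / (2 * (C + 1)))" by (simp add: \<delta>0_def)
    also have "\<dots> < mm * 1" using m C2 by (intro mult_strict_left_mono) auto
    finally show ?thesis by simp
  qed
  have d01: "\<delta>0 < 1"
  proof -
    have "\<delta>0 = mm / (2 * (C + 1))" by (simp add: \<delta>0_def)
    also have "\<dots> \<le> mm / 2" using m C2 by (intro divide_left_mono) auto
    also have "\<dots> < 1" using m assms(6) by simp
    finally show ?thesis .
  qed
  have dK1: "\<delta>0 * K1 \<le> \<delta>0 * C" using C2 d0p by (intro mult_left_mono) auto
  show ?thesis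
  proof (rule exI[of _ \<delta>0], intro conjI allI impI)
    show "0 < \<delta>0" "\<delta>0 < 1" by (fact d0p, fact d01)
  next
    fix S :: "'n set" and \<epsilon> :: real and \<mu>s \<delta> :: "'n \<Rightarrow> real"
    assume H: "card S = m \<and> 0 < \<epsilon> \<and> \<epsilon> < 1 \<and>
       (\<forall>j\<in>S. \<mu>' \<le> \<mu>s j \<and> \<mu>s j \<le> 1) \<and>
       (\<forall>j. j \<notin> S \<longrightarrow> 0 \<le> \<mu>s j \<and> \<mu>s j \<le> \<mu>) \<and>
       (\<forall>j. j \<notin> S \<longrightarrow> 0 < \<delta> j \<and> \<delta> j \<le> \<mu>s j \<and> \<delta> j < \<delta>0)"
    then have eps: "0 < \<epsilon>" and HS: "\<And>j. j \<in> S \<Longrightarrow> \<mu>' \<le> \<mu>s j \<and> \<mu>s j \<le> 1"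
      and HN: "\<And>j. j \<notin> S \<Longrightarrow> 0 \<le> \<mu>s j \<and> \<mu>s j \<le> \<mu>"
      and HD: "\<And>j. j \<notin> S \<Longrightarrow> 0 < \<delta> j \<and> \<delta> j \<le> \<mu>s j \<and> \<delta> j < \<delta>0"
      by auto
    define b where "b = (\<lambda>j. if j \<in> S then \<mu>s j else - \<mu>s j)"
    define d where "d = (\<lambda>j. if j \<in> S then 0 else \<delta> j)"
    have rho: "(\<lambda>z::complex^'n.
               (\<Sum>j\<in>S. (Re (z$j))\<^sup>2 + \<mu>s j * (Im (z$j))\<^sup>2)
             + (\<Sum>j\<in>UNIV - S. (Re (z$j))\<^sup>2 - \<mu>s j * (Im (z$j))\<^sup>2)
             + cutoff ((norm z)\<^sup>2 / \<epsilon>\<^sup>2) * (\<Sum>j\<in>UNIV - S. \<delta> j * (Im (z$j))\<^sup>2))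
         = ff cutoff (\<lambda>_. 1) b d (\<epsilon>\<^sup>2)"
    proof
      fix z :: "complex^'n"
      have q: "bf (\<lambda>_. 1) b z z = (\<Sum>j\<in>UNIV. if j \<in> S then (Re (z$j))\<^sup>2 + \<mu>s j * (Im (z$j))\<^sup>2
                  else (Re (z$j))\<^sup>2 - \<mu>s j * (Im (z$j))\<^sup>2)"
        unfolding bf_def b_def by (intro sum.cong) (auto simp: power2_eq_square)
      have pp: "bf (\<lambda>_. 0) d z z = (\<Sum>j\<in>UNIV. if j \<in> S then 0 else \<delta> j * (Im (z$j))\<^sup>2)"
        unfolding bf_def d_def by (intro sum.cong) (auto simp: power2_eq_square)
      have US: "UNIV \<inter> - {x. x \<in> S} = UNIV - S" "UNIV \<inter> {x. x \<in> S} = S" by auto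
      show "(\<Sum>j\<in>S. (Re (z$j))\<^sup>2 + \<mu>s j * (Im (z$j))\<^sup>2)
             + (\<Sum>j\<in>UNIV - S. (Re (z$j))\<^sup>2 - \<mu>s j * (Im (z$j))\<^sup>2)
             + cutoff ((norm z)\<^sup>2 / \<epsilon>\<^sup>2) * (\<Sum>j\<in>UNIV - S. \<delta> j * (Im (z$j))\<^sup>2)
             = ff cutoff (\<lambda>_. 1) b d (\<epsilon>\<^sup>2) z"
        unfolding ff_def q pp bf11_norm sum.If_cases[OF finite] US by simp
    qed
    have dd: "\<And>j. 0 \<le> d j \<and> d j \<le> \<delta>0" using HD d0p by (auto simp: d_def less_imp_le)
    have bb: "\<And>j. - \<mu> \<le> b j" using HS HN assms(6,8) by (force simp: b_def)
    have DC: "\<delta>0 * (4 * K2 + 10 * K1 + 2) < 1 - \<mu>" using d0C m by (simp add: C_def)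
    show "let \<rho>\<epsilon>\<delta> = (\<lambda>z::complex^'n.
               (\<Sum>j\<in>S. (Re (z$j))\<^sup>2 + \<mu>s j * (Im (z$j))\<^sup>2)
             + (\<Sum>j\<in>UNIV - S. (Re (z$j))\<^sup>2 - \<mu>s j * (Im (z$j))\<^sup>2)
             + cutoff ((norm z)\<^sup>2 / \<epsilon>\<^sup>2) * (\<Sum>j\<in>UNIV - S. \<delta> j * (Im (z$j))\<^sup>2))
        in strictly_psh_on \<rho>\<epsilon>\<delta> (ball 0 \<epsilon>) \<and>
           (\<forall>p\<in>ball 0 \<epsilon>. (\<rho>\<epsilon>\<delta> has_derivative (\<lambda>_. 0)) (at p) \<longrightarrow> \<rho>\<epsilon>\<delta> p \<le> 0)"
      unfolding Let_def rho
    proof (intro conjI ballI impI)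
      show "strictly_psh_on (ff cutoff (\<lambda>_. 1) b d (\<epsilon>\<^sup>2)) (ball 0 \<epsilon>)"
        by (rule psh_part[OF d1 d2 c2c assms(3) K1(2) K2(2) eps dd bb DC])
    next
      fix p :: "complex^'n"
      assume p: "p \<in> ball 0 \<epsilon>" and cr: "(ff cutoff (\<lambda>_. 1) b d (\<epsilon>\<^sup>2) has_derivative (\<lambda>_. 0)) (at p)"
      show "ff cutoff (\<lambda>_. 1) b d (\<epsilon>\<^sup>2) p \<le> 0"
      proof (rule crit_part[OF d1 d2 assms(3) K1(2) eps dd _ _ _ _ p cr])
        show "\<delta>0 * K1 < 1" using dK1 d0C m assms(6) by linarith
        show "\<delta>0 * K1 < \<mu>'" using dK1 d0C m by linarith
        show "\<And>j. j \<in> S \<Longrightarrow> \<mu>' \<le> b j \<and> d j = 0" using HS by (simp add: b_def d_def)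
        show "\<And>j. j \<notin> S \<Longrightarrow> 0 < d j \<and> d j \<le> - b j" using HD by (simp add: b_def d_def)
      qed
    qed
  qed
qed


end
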